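(* Let $G=(V,E)$ be an $S$-regular graph with cells $V_1,\dots,V_k$, $n_i=|V_i|$, and let $B,C\subseteq V$, with $B_i=B\cap V_i$, $C_j=C\cap V_j$. Then \[\Bigl|\,|E(B,C)|-\sum_{i=1}^k\sum_{j=1}^k\sqrt{\tfrac{s_{ij}s_{ji}}{n_in_j}}\,|B_i||C_j|\,\Bigr|\le\lambda_B\sqrt{|B||C|}.\]
   Context: All graphs are simple, undirected and connected. $G$ is $S$-regular ($S=(s_{ij})$ a $k\times k$ nonnegative integer matrix) if $V$ is partitioned into nonempty cells $V_1,\dots,V_k$ such that every vertex of $V_i$ has exactly $s_{ij}$ neighbours in $V_j$. $|E(B,C)|$ denotes the number of pairs $(u,v)\in B\times C$ with $uv\in E$ (i.e. $\mathbf{1}_B^TA\mathbf{1}_C$, $A$ the adjacency matrix). The subspace $W=\mathrm{span}\{\mathbf{1}_{V_1},\dots,\mathbf{1}_{V_k}\}$ is $A$-invariant with eigenvalues on $W$ equal to those of $S$; the eigenvalues of $A$ on $W^\perp$ are the bulk eigenvalues (assume $|V|>k$), and $\lambda_B$ is the largest absolute value of a bulk eigenvalue. *)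

theory Defs
  imports "HOL-Analysis.Analysis"
begin

definition simple_graph :: "'a set \<Rightarrow> ('a \<Rightarrow> 'a \<Rightarrow> bool) \<Rightarrow> bool" where
  "simple_graph V E \<longleftrightarrow> finite V \<and> V \<noteq> {} \<and>
     (\<forall>u v. E u v \<longrightarrow> u \<in> V \<and> v \<in> V) \<and>
     (\<forall>u v. E u v \<longrightarrow> E v u) \<and> (\<forall>u. \<not> E u u)"

definition connected_graph :: "'a set \<Rightarrow> ('a \<Rightarrow> 'a \<Rightarrow> bool) \<Rightarrow> bool" where
  "connected_graph V E \<longleftrightarrow> (\<forall>u\<in>V. \<forall>v\<in>V. E\<^sup>*\<^sup>* u v)"

definition is_partition :: "'a set \<Rightarrow> nat \<Rightarrow> (nat \<Rightarrow> 'a set) \<Rightarrow> bool" where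
  "is_partition V k P \<longleftrightarrow> (\<forall>i<k. P i \<noteq> {}) \<and> (\<forall>i<k. \<forall>j<k. i \<noteq> j \<longrightarrow> P i \<inter> P j = {})
     \<and> (\<Union>i<k. P i) = V"

definition S_regular :: "'a set \<Rightarrow> ('a \<Rightarrow> 'a \<Rightarrow> bool) \<Rightarrow> nat \<Rightarrow> (nat \<Rightarrow> 'a set) \<Rightarrow> (nat \<Rightarrow> nat \<Rightarrow> nat) \<Rightarrow> bool" where
  "S_regular V E k P s \<longleftrightarrow> is_partition V k P \<and>
     (\<forall>i<k. \<forall>j<k. \<forall>v\<in>P i. card {u \<in> P j. E v u} = s i j)"

definition adj_apply :: "'a set \<Rightarrow> ('a \<Rightarrow> 'a \<Rightarrow> bool) \<Rightarrow> ('a \<Rightarrow> real) \<Rightarrow> 'a \<Rightarrow> real" where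
  "adj_apply V E x v = (\<Sum>u\<in>V. if E v u then x u else 0)"

text \<open>Bulk eigenvalues: eigenvalues of A on the orthogonal complement of
  W = span of the cell indicator vectors.\<close>
definition bulk_eigenvalues :: "'a set \<Rightarrow> ('a \<Rightarrow> 'a \<Rightarrow> bool) \<Rightarrow> nat \<Rightarrow> (nat \<Rightarrow> 'a set) \<Rightarrow> real set" where
  "bulk_eigenvalues V E k P = {\<mu>. \<exists>x :: 'a \<Rightarrow> real.
      (\<forall>v. v \<notin> V \<longrightarrow> x v = 0) \<and> (\<exists>v\<in>V. x v \<noteq> 0) \<and>
      (\<forall>i<k. (\<Sum>v\<in>P i. x v) = 0) \<and>
      (\<forall>v\<in>V. adj_apply V E x v = \<mu> * x v)}"

definition lambda_B :: "'a set \<Rightarrow> ('a \<Rightarrow> 'a \<Rightarrow> bool) \<Rightarrow> nat \<Rightarrow> (nat \<Rightarrow> 'a set) \<Rightarrow> real" where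
  "lambda_B V E k P = Max (abs ` bulk_eigenvalues V E k P)"

definition edges_between :: "('a \<Rightarrow> 'a \<Rightarrow> bool) \<Rightarrow> 'a set \<Rightarrow> 'a set \<Rightarrow> nat" where
  "edges_between E B C = card {(u, v). u \<in> B \<and> v \<in> C \<and> E u v}"

end

theory Submission
  imports Defs
begin


lemma cont_g:
  fixes V :: "'a set"
  shows "continuous_on S (\<lambda>x::'a\<Rightarrow>real. \<Sum>v\<in>V. adj_apply V E x v * adj_apply V E x v)"
proof -
  have c: "continuous_on S (\<lambda>x::'a\<Rightarrow>real. if E v u then x u else 0)" for v u
    by (cases "E v u") (auto intro: continuous_on_subset[OF continuous_on_product_coordinates])
  show ?thesis unfolding adj_apply_def
    by (intro continuous_intros c)
qed

definition ip :: "'a set \<Rightarrow> ('a \<Rightarrow> real) \<Rightarrow> ('a \<Rightarrow> real) \<Rightarrow> real" where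
  "ip V x y = (\<Sum>v\<in>V. x v * y v)"

locale sreg =
  fixes V :: "'a set" and E :: "'a \<Rightarrow> 'a \<Rightarrow> bool" and k :: nat
    and P :: "nat \<Rightarrow> 'a set" and s :: "nat \<Rightarrow> nat \<Rightarrow> nat"
  assumes sg: "simple_graph V E" and sr: "S_regular V E k P s"
begin

abbreviation A where "A \<equiv> adj_apply V E"

lemma finV: "finite V" using sg by (simp add: simple_graph_def)
lemma E_in: "E u v \<Longrightarrow> u \<in> V \<and> v \<in> V" using sg by (simp add: simple_graph_def)
lemma E_sym: "E u v \<Longrightarrow> E v u" using sg by (simp add: simple_graph_def)
lemma V_eq: "V = (\<Union>i<k. P i)" using sr by (simp add: S_regular_def is_partition_def)
lemma P_sub: "i < k \<Longrightarrow> P i \<subseteq> V" using V_eq by auto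
lemma P_fin: "i < k \<Longrightarrow> finite (P i)" using P_sub finV finite_subset by blast
lemma P_ne: "i < k \<Longrightarrow> P i \<noteq> {}" using sr by (simp add: S_regular_def is_partition_def)
lemma P_card: "i < k \<Longrightarrow> card (P i) > 0" using P_ne P_fin by (simp add: card_gt_0_iff)
lemma P_disj: "i < k \<Longrightarrow> j < k \<Longrightarrow> i \<noteq> j \<Longrightarrow> P i \<inter> P j = {}"
  using sr by (simp add: S_regular_def is_partition_def)
lemma cnt: "i < k \<Longrightarrow> j < k \<Longrightarrow> v \<in> P i \<Longrightarrow> card {u \<in> P j. E v u} = s i j"
  using sr by (simp add: S_regular_def)

lemma sum_V: "sum f V = (\<Sum>i<k. sum f (P i))"
proof -
  have "sum f (\<Union>i\<in>{..<k}. P i) = (\<Sum>i<k. sum f (P i))"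
    by (rule sum.UNION_disjoint) (auto simp: P_fin dest: P_disj)
  then show ?thesis using V_eq by simp
qed

lemma A_out: "v \<notin> V \<Longrightarrow> A x v = 0"
  unfolding adj_apply_def by (rule sum.neutral) (auto dest: E_in)

lemma A_add: "A (\<lambda>u. x u + y u) v = A x v + A y v"
  unfolding adj_apply_def by (auto simp add: sum.distrib[symmetric] intro!: sum.cong)

lemma A_diff: "A (\<lambda>u. x u - y u) v = A x v - A y v"
  unfolding adj_apply_def by (auto simp add: sum_subtractf[symmetric] intro!: sum.cong)

lemma A_scale: "A (\<lambda>u. c * x u) v = c * A x v"
  unfolding adj_apply_def by (auto simp add: sum_distrib_left intro!: sum.cong)

lemma A_cong: "(\<And>u. u \<in> V \<Longrightarrow> x u = y u) \<Longrightarrow> A x v = A y v"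
  unfolding adj_apply_def by (auto intro!: sum.cong)

lemma ip_sym: "ip V x (A y) = ip V (A x) y"
proof -
  have "ip V x (A y) = (\<Sum>v\<in>V. \<Sum>u\<in>V. if E v u then x v * y u else 0)"
    unfolding ip_def adj_apply_def by (simp add: sum_distrib_left if_distrib cong: if_cong)
  also have "\<dots> = (\<Sum>u\<in>V. \<Sum>v\<in>V. if E v u then x v * y u else 0)"
    by (rule sum.swap)
  also have "\<dots> = ip V (A x) y"
    unfolding ip_def adj_apply_def
    by (auto simp: sum_distrib_right if_distrib dest: E_sym intro!: sum.cong)
  finally show ?thesis .
qed

definition inU :: "('a \<Rightarrow> real) \<Rightarrow> bool" where
  "inU x \<longleftrightarrow> (\<forall>v. v \<notin> V \<longrightarrow> x v = 0) \<and> (\<forall>i<k. sum x (P i) = 0)"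

lemma sum_if_card: "finite S \<Longrightarrow> (\<Sum>v\<in>S. if Q v then c else 0) = c * real (card {v\<in>S. Q v})"
  by (simp add: sum.inter_filter[symmetric])

lemma A_inU: assumes "inU x" shows "inU (A x)"
proof -
  have "sum (A x) (P i) = 0" if i: "i < k" for i
  proof -
    have "sum (A x) (P i) = (\<Sum>v\<in>P i. \<Sum>u\<in>V. if E v u then x u else 0)"
      unfolding adj_apply_def ..
    also have "\<dots> = (\<Sum>u\<in>V. \<Sum>v\<in>P i. if E u v then x u else 0)"
      by (subst sum.swap) (auto intro!: sum.cong dest: E_sym)
    also have "\<dots> = (\<Sum>u\<in>V. x u * real (card {v\<in>P i. E u v}))"
      using P_fin[OF i] by (simp add: sum_if_card)
    also have "\<dots> = (\<Sum>j<k. \<Sum>u\<in>P j. x u * real (card {v\<in>P i. E u v}))"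
      by (rule sum_V)
    also have "\<dots> = (\<Sum>j<k. \<Sum>u\<in>P j. x u * real (s j i))"
      using i by (auto simp: cnt intro!: sum.cong)
    also have "\<dots> = (\<Sum>j<k. real (s j i) * sum x (P j))"
      by (simp add: sum_distrib_left sum_distrib_right mult.commute)
    also have "\<dots> = 0" using assms by (simp add: inU_def)
    finally show ?thesis .
  qed
  then show ?thesis using A_out by (simp add: inU_def)
qed

end


lemma compact_box:
  fixes V :: "'a set"
  shows "compact (PiE UNIV (\<lambda>a. if a \<in> V then {-1..1::real} else {0}))"
proof -
  have "compactin (product_topology (\<lambda>i. euclidean) UNIV) (PiE UNIV (\<lambda>a. if a \<in> V then {-1..1::real} else {0}))"
    unfolding compactin_PiE by (auto simp: compactin_euclidean_iff)
  then show ?thesis by (simp add: euclidean_product_topology compactin_euclidean_iff)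
qed

lemma closed_K:
  fixes V :: "'a set" and P :: "nat \<Rightarrow> 'a set" and k :: nat
  shows "closed {x::'a\<Rightarrow>real. (\<forall>v. v \<notin> V \<longrightarrow> x v = 0) \<and> (\<forall>i<k. sum x (P i) = 0) \<and> (\<Sum>v\<in>V. x v * x v) = 1}"
  apply (intro closed_Collect_conj closed_Collect_all closed_Collect_imp closed_Collect_eq)
  apply (auto intro!: continuous_intros simp: closed_Collect_const)
  done

lemma ip_self_nonneg: "ip V x x \<ge> 0"
  unfolding ip_def by (auto intro: sum_nonneg)

lemma ip_zero: "finite V \<Longrightarrow> ip V x x = 0 \<Longrightarrow> v \<in> V \<Longrightarrow> x v = 0"
  unfolding ip_def by (subst (asm) sum_nonneg_eq_0_iff) auto

lemma sq_le_ip: "finite V \<Longrightarrow> v \<in> V \<Longrightarrow> x v * x v \<le> ip V x x"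
  unfolding ip_def by (rule member_le_sum) auto

context sreg begin

definition K where "K = {x::'a\<Rightarrow>real. (\<forall>v. v \<notin> V \<longrightarrow> x v = 0) \<and> (\<forall>i<k. sum x (P i) = 0) \<and> (\<Sum>v\<in>V. x v * x v) = 1}"

lemma K_inU: "x \<in> K \<Longrightarrow> inU x" by (simp add: K_def inU_def)

lemma exists_U: assumes "card V > k" shows "\<exists>x. inU x \<and> ip V x x = 1"
proof -
  have "\<exists>i<k. card (P i) \<ge> 2"
  proof (rule ccontr)
    assume "\<not> ?thesis"
    then have le: "\<forall>i<k. card (P i) \<le> 1" by auto
    have "card V \<le> (\<Sum>i<k. card (P i))" using V_eq card_UN_le[of "{..<k}" P] by simp
    also have "\<dots> \<le> (\<Sum>i<k. 1)" using le by (intro sum_mono) auto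
    finally show False using assms by simp
  qed
  then obtain i where i: "i < k" "card (P i) \<ge> 2" by auto
  then obtain a b where ab: "a \<in> P i" "b \<in> P i" "a \<noteq> b"
  proof -
    have "\<not> card (P i) \<le> Suc 0" using i by simp
    then show ?thesis using that by (auto simp: card_le_Suc0_iff_eq[OF P_fin[OF i(1)]])
  qed
  define x where "x = (\<lambda>v. if v = a then 1 / sqrt 2 else if v = b then - 1 / sqrt 2 else (0::real))"
  have aV: "a \<in> V" "b \<in> V" using ab i P_sub by auto
  have "sum x (P j) = 0" if j: "j < k" for j
  proof (cases "j = i")
    case True
    have "sum x (P j) = sum x {a, b}"
      using ab True P_fin[OF j] by (intro sum.mono_neutral_right) (auto simp: x_def)
    then show ?thesis using ab by (simp add: x_def)
  next
    case False
    then have "a \<notin> P j" "b \<notin> P j" using P_disj[OF j i(1)] ab by auto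
    then show ?thesis by (intro sum.neutral) (auto simp: x_def)
  qed
  moreover have "x v = 0" if "v \<notin> V" for v using that aV by (auto simp: x_def)
  moreover have "ip V x x = 1"
  proof -
    have "ip V x x = (\<Sum>v\<in>{a,b}. x v * x v)"
      unfolding ip_def using aV finV by (intro sum.mono_neutral_right) (auto simp: x_def)
    then show ?thesis using ab by (simp add: x_def)
  qed
  ultimately show ?thesis unfolding inU_def by blast
qed

lemma exists_max: assumes "card V > k"
  shows "\<exists>x0\<in>K. \<forall>y\<in>K. ip V (A y) (A y) \<le> ip V (A x0) (A x0)"
proof -
  let ?B = "PiE UNIV (\<lambda>a. if a \<in> V then {-1..1::real} else {0})"
  have sub: "K \<subseteq> ?B"
  proof
    fix x assume x: "x \<in> K"
    have "x a \<in> {-1..1}" if "a \<in> V" for a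
    proof -
      have "x a * x a \<le> 1" using sq_le_ip[OF finV that, of x] x by (simp add: K_def ip_def)
      then have "\<bar>x a\<bar> \<le> 1" by (simp add: power2_eq_square[symmetric] abs_square_le_1)
      then show ?thesis by auto
    qed
    then show "x \<in> ?B" using x by (auto simp: K_def PiE_def extensional_def)
  qed
  have "compact (?B \<inter> K)" unfolding K_def by (intro compact_Int_closed compact_box closed_K)
  then have cK: "compact K" using sub by (simp add: Int_absorb1)
  obtain x where "inU x" "ip V x x = 1" using exists_U[OF assms] by auto
  then have "K \<noteq> {}" by (auto simp: K_def inU_def ip_def)
  from continuous_attains_sup[OF cK this cont_g[of K V E]] show ?thesis by (simp add: ip_def)
qed

end


lemma ip_scale_l: "ip V (\<lambda>v. c * x v) y = c * ip V x y"
  unfolding ip_def by (simp add: sum_distrib_left mult.assoc)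
lemma ip_scale_r: "ip V x (\<lambda>v. c * y v) = c * ip V x y"
  unfolding ip_def by (simp add: sum_distrib_left mult.left_commute)
lemma ip_comm: "ip V x y = ip V y x"
  unfolding ip_def by (simp add: mult.commute)
lemma ip_add_l: "ip V (\<lambda>v. x v + y v) z = ip V x z + ip V y z"
  unfolding ip_def by (simp add: sum.distrib distrib_right)
lemma ip_diff_l: "ip V (\<lambda>v. x v - y v) z = ip V x z - ip V y z"
  unfolding ip_def by (simp add: sum_subtractf left_diff_distrib)
lemma ip_add_r: "ip V z (\<lambda>v. x v + y v) = ip V z x + ip V z y"
  unfolding ip_def by (simp add: sum.distrib distrib_left)
lemma ip_diff_r: "ip V z (\<lambda>v. x v - y v) = ip V z x - ip V z y"
  unfolding ip_def by (simp add: sum_subtractf right_diff_distrib)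
lemma ip_cong: "(\<And>v. v \<in> V \<Longrightarrow> x v = x' v) \<Longrightarrow> (\<And>v. v \<in> V \<Longrightarrow> y v = y' v) \<Longrightarrow> ip V x y = ip V x' y'"
  unfolding ip_def by (auto intro!: sum.cong)

lemma cauchy_schwarz: "\<bar>ip V x z\<bar> \<le> sqrt (ip V x x) * sqrt (ip V z z)"
proof -
  have "\<bar>ip V x z\<bar> \<le> (\<Sum>v\<in>V. \<bar>x v\<bar> * \<bar>z v\<bar>)"
    unfolding ip_def using sum_abs[of "\<lambda>v. x v * z v" V] by (simp add: abs_mult)
  also have "\<dots> \<le> L2_set x V * L2_set z V" by (rule L2_set_mult_ineq)
  also have "\<dots> = sqrt (ip V x x) * sqrt (ip V z z)"
    unfolding L2_set_def ip_def by (simp add: power2_eq_square)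
  finally show ?thesis .
qed

context sreg begin

lemma g_bound:
  assumes x0: "x0 \<in> K" and mx: "\<forall>y\<in>K. ip V (A y) (A y) \<le> ip V (A x0) (A x0)"
    and y: "inU y"
  shows "ip V (A y) (A y) \<le> ip V (A x0) (A x0) * ip V y y"
proof (cases "ip V y y = 0")
  case True
  have y0: "y v = 0" if "v \<in> V" for v using ip_zero[OF finV True that] .
  have "A y v = A (\<lambda>_. 0) v" for v by (rule A_cong) (simp add: y0)
  moreover have "A (\<lambda>_. 0) v = 0" for v unfolding adj_apply_def by simp
  ultimately have Ay0: "A y v = 0" for v by simp
  have "ip V (A y) (A y) = 0" unfolding ip_def Ay0 by simp
  then show ?thesis by (simp add: True)
next
  case False
  define r where "r = sqrt (ip V y y)"
  have rpos: "r > 0" using False ip_self_nonneg[of V y] by (simp add: r_def)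
  have r2: "r * r = ip V y y" using ip_self_nonneg[of V y] by (simp add: r_def)
  define y' where "y' = (\<lambda>v. (1/r) * y v)"
  have "sum y' (P i) = (1/r) * sum y (P i)" for i by (simp add: y'_def sum_distrib_left)
  then have "inU y'" using y by (simp add: inU_def y'_def)
  moreover have "ip V y' y' = (1/r) * ((1/r) * (r * r))"
    unfolding y'_def ip_scale_l ip_scale_r r2 ..
  then have "ip V y' y' = 1" using rpos by simp
  ultimately have "y' \<in> K" by (simp add: K_def inU_def ip_def)
  then have le: "ip V (A y') (A y') \<le> ip V (A x0) (A x0)" using mx by blast
  have "A y' = (\<lambda>v. (1/r) * A y v)" unfolding y'_def by (rule ext) (rule A_scale)
  then have "ip V (A y') (A y') = (1/r) * ((1/r) * ip V (A y) (A y))"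
    by (simp only: ip_scale_l ip_scale_r)
  then have le2: "(1/r) * ((1/r) * ip V (A y) (A y)) \<le> ip V (A x0) (A x0)" using le by simp
  have "ip V (A y) (A y) = (r * r) * ((1/r) * ((1/r) * ip V (A y) (A y)))" using rpos by simp
  also have "\<dots> \<le> (r * r) * ip V (A x0) (A x0)" using le2 rpos by (intro mult_left_mono) auto
  finally show ?thesis using r2 by (simp add: mult.commute)
qed

lemma eig_exists:
  assumes x0: "x0 \<in> K" and mx: "\<forall>y\<in>K. ip V (A y) (A y) \<le> ip V (A x0) (A x0)"
  shows "\<exists>\<mu>\<in>bulk_eigenvalues V E k P. \<bar>\<mu>\<bar> = sqrt (ip V (A x0) (A x0))"
proof -
  define M2 where "M2 = ip V (A x0) (A x0)"
  define M where "M = sqrt M2"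
  have M2nn: "M2 \<ge> 0" by (simp add: M2_def ip_self_nonneg)
  have MM: "M * M = M2" by (simp add: M_def M2nn)
  have M0: "M \<ge> 0" by (simp add: M_def M2nn)
  have ux: "inU x0" using x0 by (rule K_inU)
  have xx: "ip V x0 x0 = 1" using x0 by (simp add: K_def ip_def)
  define z where "z = A (A x0)"
  have uAx: "inU (A x0)" by (rule A_inU[OF ux])
  have uz: "inU z" unfolding z_def by (rule A_inU[OF uAx])
  have xz: "ip V x0 z = M2" unfolding z_def M2_def by (simp add: ip_sym)
  have zz: "ip V z z \<le> M2 * M2"
    using g_bound[OF x0 mx uAx] unfolding z_def M2_def[symmetric] by simp
  define w where "w = (\<lambda>v. M2 * x0 v - z v)"
  have e1: "ip V w w = ip V (\<lambda>v. M2 * x0 v) w - ip V z w"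
    unfolding w_def[of] by (rule ip_diff_l)
  have e2: "ip V (\<lambda>v. M2 * x0 v) w = M2 * (M2 * ip V x0 x0 - ip V x0 z)"
    unfolding w_def ip_diff_r ip_scale_l ip_scale_r by (simp add: right_diff_distrib)
  have e3: "ip V z w = M2 * ip V x0 z - ip V z z"
    unfolding w_def ip_diff_r ip_scale_r ip_comm[of V z x0] ..
  have "ip V w w = M2 * M2 * ip V x0 x0 - 2 * M2 * ip V x0 z + ip V z z"
    unfolding e1 e2 e3 by (simp add: algebra_simps)
  also have "\<dots> \<le> 0" using xx xz zz by simp
  finally have "ip V w w = 0" using ip_self_nonneg[of V w] by linarith
  then have zeq: "v \<in> V \<Longrightarrow> z v = M2 * x0 v" for v using ip_zero[OF finV, of w v] unfolding w_def by simp
  define y where "y = (\<lambda>v. A x0 v + M * x0 v)"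
  have yout: "v \<notin> V \<Longrightarrow> y v = 0" for v using ux A_out by (simp add: y_def inU_def)
  have yU: "i < k \<Longrightarrow> sum y (P i) = 0" for i
    using ux uAx by (simp add: y_def inU_def sum.distrib sum_distrib_left[symmetric])
  have Ay: "v \<in> V \<Longrightarrow> A y v = M * y v" for v
  proof -
    assume v: "v \<in> V"
    have "A y v = A (A x0) v + M * A x0 v" unfolding y_def A_add A_scale ..
    also have "\<dots> = M2 * x0 v + M * A x0 v" using zeq[OF v] by (simp add: z_def)
    also have "\<dots> = M * y v" by (simp add: y_def MM[symmetric] algebra_simps)
    finally show ?thesis .
  qed
  show ?thesis
  proof (cases "\<exists>v\<in>V. y v \<noteq> 0")
    case True
    then have "M \<in> bulk_eigenvalues V E k P"
      unfolding bulk_eigenvalues_def using yout yU Ay by blast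
    then show ?thesis using M0 by (intro bexI[where x=M]) (simp_all add: M_def M2_def)
  next
    case False
    then have Ax: "v \<in> V \<Longrightarrow> A x0 v = (-M) * x0 v" for v by (auto simp: y_def)
    have "\<exists>v\<in>V. x0 v \<noteq> 0"
    proof (rule ccontr)
      assume "\<not> ?thesis"
      then have "ip V x0 x0 = 0" by (simp add: ip_def)
      then show False using xx by simp
    qed
    moreover have "\<forall>v. v \<notin> V \<longrightarrow> x0 v = 0" "\<forall>i<k. sum x0 (P i) = 0" using ux by (auto simp: inU_def)
    ultimately have "-M \<in> bulk_eigenvalues V E k P"
      unfolding bulk_eigenvalues_def using Ax by blast
    then show ?thesis using M0 by (intro bexI[where x="-M"]) (simp_all add: M_def M2_def)
  qed
qed

end


lemma ip_sum_r: "ip V x (\<lambda>v. \<Sum>\<mu>\<in>J. g \<mu> v) = (\<Sum>\<mu>\<in>J. ip V x (g \<mu>))"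
  unfolding ip_def by (simp add: sum_distrib_left sum.swap[where A=V])

lemma ip_sum_l: "ip V (\<lambda>v. \<Sum>\<mu>\<in>J. g \<mu> v) x = (\<Sum>\<mu>\<in>J. ip V (g \<mu>) x)"
  using ip_sum_r[where V=V and x=x and J=J and g=g] by (simp add: ip_comm)

lemma bessel:
  assumes J: "finite J" and n1: "\<forall>\<mu>\<in>J. ip V (f \<mu>) (f \<mu>) = 1"
    and orth: "\<forall>\<mu>\<in>J. \<forall>\<nu>\<in>J. \<mu> \<noteq> \<nu> \<longrightarrow> ip V (f \<mu>) (f \<nu>) = 0"
  shows "(\<Sum>\<mu>\<in>J. ip V y (f \<mu>) * ip V y (f \<mu>)) \<le> ip V y y"
proof -
  define c where "c \<mu> = ip V y (f \<mu>)" for \<mu>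
  define S where "S = (\<lambda>v. \<Sum>\<mu>\<in>J. c \<mu> * f \<mu> v)"
  have yS: "ip V y S = (\<Sum>\<mu>\<in>J. c \<mu> * c \<mu>)"
    unfolding S_def ip_sum_r ip_scale_r c_def ..
  have fS: "ip V (f \<mu>) S = c \<mu>" if mu: "\<mu> \<in> J" for \<mu>
  proof -
    have "ip V (f \<mu>) S = (\<Sum>\<nu>\<in>J. c \<nu> * ip V (f \<mu>) (f \<nu>))"
      unfolding S_def ip_sum_r ip_scale_r ..
    also have "\<dots> = (\<Sum>\<nu>\<in>J. if \<nu> = \<mu> then c \<mu> else 0)"
      using n1 orth mu by (intro sum.cong) auto
    also have "\<dots> = c \<mu>" using J mu by simp
    finally show ?thesis .
  qed
  have SS: "ip V S S = (\<Sum>\<mu>\<in>J. c \<mu> * c \<mu>)"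
  proof -
    have "ip V S S = (\<Sum>\<mu>\<in>J. c \<mu> * ip V (f \<mu>) S)"
      unfolding S_def[of] ip_sum_l ip_scale_l by (simp add: S_def)
    also have "\<dots> = (\<Sum>\<mu>\<in>J. c \<mu> * c \<mu>)" using fS by (intro sum.cong) auto
    finally show ?thesis .
  qed
  define w where "w = (\<lambda>v. y v - S v)"
  have "ip V w w = ip V y y - 2 * ip V y S + ip V S S"
    unfolding w_def ip_diff_l ip_diff_r ip_comm[of V S y] by simp
  then have "0 \<le> ip V y y - (\<Sum>\<mu>\<in>J. c \<mu> * c \<mu>)"
    using ip_self_nonneg[of V w] yS SS by simp
  then show ?thesis by (simp add: c_def)
qed

context sreg begin

lemma normalized_eig:
  assumes "\<mu> \<in> bulk_eigenvalues V E k P"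
  shows "\<exists>x. (\<forall>v. v \<notin> V \<longrightarrow> x v = 0) \<and> ip V x x = 1 \<and> (\<forall>v\<in>V. A x v = \<mu> * x v)"
proof -
  obtain x where x0: "\<forall>v. v \<notin> V \<longrightarrow> x v = 0" and nz: "\<exists>v\<in>V. x v \<noteq> 0"
    and ev: "\<forall>v\<in>V. A x v = \<mu> * x v"
    using assms unfolding bulk_eigenvalues_def by blast
  have "ip V x x \<noteq> 0" using nz ip_zero[OF finV, of x] by blast
  then have pos: "ip V x x > 0" using ip_self_nonneg[of V x] by linarith
  define r where "r = sqrt (ip V x x)"
  have rpos: "r > 0" using pos by (simp add: r_def)
  have r2: "r * r = ip V x x" using pos by (simp add: r_def)
  define y where "y = (\<lambda>v. (1/r) * x v)"
  have "ip V y y = (1/r) * ((1/r) * (r * r))" unfolding y_def ip_scale_l ip_scale_r r2 ..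
  then have "ip V y y = 1" using rpos by simp
  moreover have "\<forall>v. v \<notin> V \<longrightarrow> y v = 0" using x0 by (simp add: y_def)
  moreover have "\<forall>v\<in>V. A y v = \<mu> * y v"
    using ev unfolding y_def A_scale by simp
  ultimately show ?thesis by blast
qed

lemma bulk_finite: "finite (bulk_eigenvalues V E k P)"
proof (rule ccontr)
  assume "\<not> ?thesis"
  then obtain J where J: "finite J" "card J = Suc (card V)" "J \<subseteq> bulk_eigenvalues V E k P"
    using infinite_arbitrarily_large by blast
  define f where "f \<mu> = (SOME x. (\<forall>v. v \<notin> V \<longrightarrow> x v = 0) \<and> ip V x x = 1 \<and> (\<forall>v\<in>V. A x v = \<mu> * x v))" for \<mu>
  have fp: "(\<forall>v. v \<notin> V \<longrightarrow> f \<mu> v = 0) \<and> ip V (f \<mu>) (f \<mu>) = 1 \<and> (\<forall>v\<in>V. A (f \<mu>) v = \<mu> * f \<mu> v)"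
    if "\<mu> \<in> J" for \<mu>
  proof -
    have "\<mu> \<in> bulk_eigenvalues V E k P" using that J(3) by blast
    from normalized_eig[OF this] show ?thesis unfolding f_def by (rule someI_ex)
  qed
  have orth: "ip V (f \<mu>) (f \<nu>) = 0" if "\<mu> \<in> J" "\<nu> \<in> J" "\<mu> \<noteq> \<nu>" for \<mu> \<nu>
  proof -
    have "\<mu> * ip V (f \<mu>) (f \<nu>) = ip V (A (f \<mu>)) (f \<nu>)"
      unfolding ip_scale_l[symmetric] using fp[OF that(1)] by (intro ip_cong) auto
    also have "\<dots> = ip V (f \<mu>) (A (f \<nu>))" by (simp add: ip_sym)
    also have "\<dots> = \<nu> * ip V (f \<mu>) (f \<nu>)"
      unfolding ip_scale_r[symmetric] using fp[OF that(2)] by (intro ip_cong) auto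
    finally have "(\<mu> - \<nu>) * ip V (f \<mu>) (f \<nu>) = 0" by (simp add: left_diff_distrib)
    then show ?thesis using that(3) by simp
  qed
  have bv: "(\<Sum>\<mu>\<in>J. f \<mu> v * f \<mu> v) \<le> 1" if v: "v \<in> V" for v
  proof -
    define y where "y = (\<lambda>u. if u = v then 1 else (0::real))"
    have eq: "(if u = v then 1 else 0) * g u = (if u = v then g u else 0)" for u and g :: "'a \<Rightarrow> real"
      by simp
    have iy: "ip V y (f \<mu>) = f \<mu> v" for \<mu>
      unfolding ip_def y_def eq using v finV by simp
    have eq2: "(if u = v then 1 else 0) * (if u = v then 1 else 0) = (if u = v then (1::real) else 0)" for u
      by simp
    have yy: "ip V y y = 1" unfolding ip_def y_def eq2 using v finV by simp
    have n1: "\<forall>\<mu>\<in>J. ip V (f \<mu>) (f \<mu>) = 1" using fp by blast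
    have o1: "\<forall>\<mu>\<in>J. \<forall>\<nu>\<in>J. \<mu> \<noteq> \<nu> \<longrightarrow> ip V (f \<mu>) (f \<nu>) = 0" using orth by blast
    have "(\<Sum>\<mu>\<in>J. ip V y (f \<mu>) * ip V y (f \<mu>)) \<le> ip V y y" by (rule bessel[OF J(1) n1 o1])
    then show ?thesis unfolding iy yy .
  qed
  have "real (card J) = (\<Sum>\<mu>\<in>J. ip V (f \<mu>) (f \<mu>))" using fp by (simp add: sum.cong[of J J _ "\<lambda>_. 1"])
  also have "\<dots> = (\<Sum>v\<in>V. \<Sum>\<mu>\<in>J. f \<mu> v * f \<mu> v)" unfolding ip_def by (rule sum.swap)
  also have "\<dots> \<le> (\<Sum>v\<in>V. 1)" using bv by (intro sum_mono) auto
  also have "\<dots> = real (card V)" by simp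
  finally show False using J(2) by simp
qed

lemma op_bound:
  assumes kV: "card V > k" and x: "inU x" and y: "inU y"
  shows "\<bar>ip V x (A y)\<bar> \<le> lambda_B V E k P * (sqrt (ip V x x) * sqrt (ip V y y))"
    and "lambda_B V E k P \<ge> 0"
proof -
  obtain x0 where x0: "x0 \<in> K" and mx: "\<forall>y\<in>K. ip V (A y) (A y) \<le> ip V (A x0) (A x0)"
    using exists_max[OF kV] by blast
  define M2 where "M2 = ip V (A x0) (A x0)"
  obtain \<mu> where mu: "\<mu> \<in> bulk_eigenvalues V E k P" "\<bar>\<mu>\<bar> = sqrt M2"
    using eig_exists[OF x0 mx] unfolding M2_def by blast
  have M2nn: "M2 \<ge> 0" unfolding M2_def by (rule ip_self_nonneg)
  have "\<bar>\<mu>\<bar> \<in> abs ` bulk_eigenvalues V E k P" using mu(1) by blast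
  from Max_ge[OF finite_imageI[OF bulk_finite] this]
  have lam: "sqrt M2 \<le> lambda_B V E k P" unfolding lambda_B_def mu(2) .
  then show "lambda_B V E k P \<ge> 0" using M2nn by (meson order.trans real_sqrt_ge_zero)
  have a: "\<bar>ip V x (A y)\<bar> \<le> sqrt (ip V x x) * sqrt (ip V (A y) (A y))" by (rule cauchy_schwarz)
  have b: "sqrt (ip V (A y) (A y)) \<le> sqrt (M2 * ip V y y)"
    using g_bound[OF x0 mx y] unfolding M2_def by simp
  have c: "sqrt (M2 * ip V y y) = sqrt M2 * sqrt (ip V y y)" by (simp add: real_sqrt_mult)
  have d: "sqrt M2 * sqrt (ip V y y) \<le> lambda_B V E k P * sqrt (ip V y y)"
    using lam by (intro mult_right_mono) (auto simp: ip_self_nonneg)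
  have "sqrt (ip V (A y) (A y)) \<le> lambda_B V E k P * sqrt (ip V y y)" using b c d by linarith
  then have "sqrt (ip V x x) * sqrt (ip V (A y) (A y)) \<le> sqrt (ip V x x) * (lambda_B V E k P * sqrt (ip V y y))"
    by (intro mult_left_mono) (auto simp: ip_self_nonneg)
  with a show "\<bar>ip V x (A y)\<bar> \<le> lambda_B V E k P * (sqrt (ip V x x) * sqrt (ip V y y))"
    by (simp add: algebra_simps)
qed

end


context sreg begin

definition ind :: "'a set \<Rightarrow> 'a \<Rightarrow> real" where "ind B v = (if v \<in> B then 1 else 0)"
definition cB :: "'a set \<Rightarrow> nat \<Rightarrow> real" where "cB B i = real (card (B \<inter> P i)) / real (card (P i))"
definition bw :: "'a set \<Rightarrow> 'a \<Rightarrow> real" where "bw B v = (\<Sum>i<k. if v \<in> P i then cB B i else 0)"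
definition bu :: "'a set \<Rightarrow> 'a \<Rightarrow> real" where "bu B v = ind B v - bw B v"

lemma bw_cell: assumes i: "i < k" and v: "v \<in> P i" shows "bw B v = cB B i"
proof -
  have "bw B v = (\<Sum>j<k. if j = i then cB B j else 0)"
    unfolding bw_def using P_disj i v by (intro sum.cong) auto
  also have "\<dots> = cB B i" using i by simp
  finally show ?thesis .
qed

lemma bw_out: "v \<notin> V \<Longrightarrow> bw B v = 0"
  unfolding bw_def using P_sub by (intro sum.neutral) auto

lemma ip_ind_l: "S \<subseteq> V \<Longrightarrow> ip V (ind S) x = sum x S"
proof -
  assume S: "S \<subseteq> V"
  have "ip V (ind S) x = (\<Sum>v\<in>V. if v \<in> S then x v else 0)"
    unfolding ip_def ind_def by (intro sum.cong) auto
  also have "\<dots> = sum x {v\<in>V. v \<in> S}" using finV by (simp add: sum.inter_filter)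
  also have "{v\<in>V. v \<in> S} = S" using S by auto
  finally show ?thesis .
qed

lemma A_ind: "S \<subseteq> V \<Longrightarrow> A (ind S) v = real (card {u\<in>S. E v u})"
proof -
  assume S: "S \<subseteq> V"
  have "A (ind S) v = (\<Sum>u\<in>V. if E v u \<and> u \<in> S then 1 else 0)"
    unfolding adj_apply_def ind_def by (intro sum.cong) auto
  also have "\<dots> = real (card {u\<in>V. E v u \<and> u \<in> S})" using finV by (simp add: sum_if_card)
  also have "{u\<in>V. E v u \<and> u \<in> S} = {u\<in>S. E v u}" using S by auto
  finally show ?thesis .
qed

lemma sum_bw: "i < k \<Longrightarrow> sum (bw B) (P i) = real (card (B \<inter> P i))"
proof -
  assume i: "i < k"
  have "sum (bw B) (P i) = (\<Sum>v\<in>P i. cB B i)" using bw_cell[OF i] by (intro sum.cong) auto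
  also have "\<dots> = real (card (P i)) * cB B i" by simp
  also have "\<dots> = real (card (B \<inter> P i))" using P_card[OF i] by (simp add: cB_def)
  finally show ?thesis .
qed

lemma sum_ind: "i < k \<Longrightarrow> sum (ind B) (P i) = real (card (B \<inter> P i))"
proof -
  assume i: "i < k"
  have "sum (ind B) (P i) = ip V (ind (P i)) (ind B)" using P_sub[OF i] by (simp add: ip_ind_l)
  also have "\<dots> = ip V (ind B) (ind (P i))" by (rule ip_comm)
  also have "\<dots> = (\<Sum>v\<in>V. if v \<in> B \<inter> P i then 1 else 0)"
    unfolding ip_def ind_def by (intro sum.cong) auto
  also have "\<dots> = real (card {v\<in>V. v \<in> B \<inter> P i})" using finV by (simp add: sum_if_card)
  also have "{v\<in>V. v \<in> B \<inter> P i} = B \<inter> P i" using P_sub[OF i] by auto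
  finally show ?thesis .
qed

lemma bu_U: "B \<subseteq> V \<Longrightarrow> inU (bu B)"
  unfolding inU_def using bw_out sum_bw sum_ind
  by (auto simp: bu_def ind_def sum_subtractf)

lemma ip_bw_U: assumes u: "inU u" shows "ip V (bw B) u = 0"
proof -
  have "ip V (bw B) u = (\<Sum>i<k. \<Sum>v\<in>P i. bw B v * u v)" unfolding ip_def by (rule sum_V)
  also have "\<dots> = (\<Sum>i<k. cB B i * sum u (P i))"
    by (intro sum.cong refl) (simp add: bw_cell sum_distrib_left)
  also have "\<dots> = 0" using u by (simp add: inU_def)
  finally show ?thesis .
qed

lemma bu_norm: assumes B: "B \<subseteq> V" shows "ip V (bu B) (bu B) \<le> real (card B)"
proof -
  have iB: "ind B = (\<lambda>v. bw B v + bu B v)" by (auto simp: bu_def)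
  have z: "ip V (bw B) (bu B) = 0" by (rule ip_bw_U[OF bu_U[OF B]])
  have "ip V (bu B) (bu B) = ip V (ind B) (bu B) - ip V (bw B) (bu B)"
    unfolding bu_def[abs_def] ip_diff_l ..
  then have e1: "ip V (bu B) (bu B) = ip V (ind B) (bu B)" using z by simp
  have e2: "ip V (ind B) (ind B) = ip V (ind B) (bw B) + ip V (ind B) (bu B)"
    by (subst (2) iB) (rule ip_add_r)
  have e3: "ip V (ind B) (bw B) = ip V (bw B) (bw B) + ip V (bu B) (bw B)"
    by (subst iB) (rule ip_add_l)
  have "ip V (bu B) (bw B) = 0" using z by (simp add: ip_comm)
  then have "ip V (ind B) (bw B) \<ge> 0" using e3 ip_self_nonneg[of V "bw B"] by simp
  moreover have "ip V (ind B) (ind B) = real (card B)" using B by (simp add: ip_ind_l ind_def)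
  ultimately show ?thesis using e1 e2 by linarith
qed

lemma edges_ip: assumes B: "B \<subseteq> V" and C: "C \<subseteq> V"
  shows "real (edges_between E B C) = ip V (ind B) (A (ind C))"
proof -
  have fB: "finite B" using B finV finite_subset by blast
  have fC: "finite C" using C finV finite_subset by blast
  have "{(u, v). u \<in> B \<and> v \<in> C \<and> E u v} = (SIGMA u:B. {v\<in>C. E u v})" by auto
  then have "edges_between E B C = (\<Sum>u\<in>B. card {v\<in>C. E u v})"
    unfolding edges_between_def using fB fC by simp
  then show ?thesis using B C by (simp add: ip_ind_l A_ind)
qed

lemma count_sym: assumes i: "i < k" and j: "j < k"
  shows "real (card (P i)) * real (s i j) = real (card (P j)) * real (s j i)"
proof -
  have "ip V (ind (P i)) (A (ind (P j))) = real (card (P i)) * real (s i j)"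
    using P_sub[OF i] P_sub[OF j] cnt[OF i j] by (simp add: ip_ind_l A_ind)
  moreover have "ip V (ind (P j)) (A (ind (P i))) = real (card (P j)) * real (s j i)"
    using P_sub[OF i] P_sub[OF j] cnt[OF j i] by (simp add: ip_ind_l A_ind)
  moreover have "ip V (ind (P i)) (A (ind (P j))) = ip V (ind (P j)) (A (ind (P i)))"
    by (subst ip_sym) (rule ip_comm)
  ultimately show ?thesis by simp
qed

lemma sqrt_coef: assumes i: "i < k" and j: "j < k"
  shows "sqrt (real (s i j * s j i) / (real (card (P i)) * real (card (P j)))) = real (s i j) / real (card (P j))"
proof -
  have ni: "real (card (P i)) > 0" and nj: "real (card (P j)) > 0" using P_card i j by auto
  have "real (s i j * s j i) / (real (card (P i)) * real (card (P j)))
        = (real (s i j) / real (card (P j)))\<^sup>2"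
    using count_sym[OF i j] ni nj by (simp add: field_simps power2_eq_square)
  then show ?thesis by simp
qed

lemma A_bw: assumes i: "i < k" and v: "v \<in> P i"
  shows "A (bw C) v = (\<Sum>j<k. real (s i j) * cB C j)"
proof -
  have "A (bw C) v = (\<Sum>u\<in>V. if E v u then bw C u else 0)" unfolding adj_apply_def ..
  also have "\<dots> = (\<Sum>j<k. \<Sum>u\<in>P j. if E v u then bw C u else 0)" by (rule sum_V)
  also have "\<dots> = (\<Sum>j<k. \<Sum>u\<in>P j. if E v u then cB C j else 0)"
    by (intro sum.cong refl) (simp add: bw_cell)
  also have "\<dots> = (\<Sum>j<k. cB C j * real (card {u\<in>P j. E v u}))"
    by (intro sum.cong refl) (simp add: sum_if_card P_fin)
  also have "\<dots> = (\<Sum>j<k. real (s i j) * cB C j)"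
    using cnt[OF i _ v] by (intro sum.cong refl) simp
  finally show ?thesis .
qed

lemma main_term: assumes B: "B \<subseteq> V"
  shows "ip V (ind B) (A (bw C)) = (\<Sum>i<k. \<Sum>j<k. sqrt (real (s i j * s j i) / (real (card (P i)) * real (card (P j))))
                 * real (card (B \<inter> P i)) * real (card (C \<inter> P j)))"
proof -
  have "ip V (ind B) (A (bw C)) = (\<Sum>i<k. \<Sum>v\<in>P i. ind B v * A (bw C) v)" unfolding ip_def by (rule sum_V)
  also have "\<dots> = (\<Sum>i<k. \<Sum>v\<in>P i. ind B v * (\<Sum>j<k. real (s i j) * cB C j))"
    by (intro sum.cong refl) (simp add: A_bw)
  also have "\<dots> = (\<Sum>i<k. real (card (B \<inter> P i)) * (\<Sum>j<k. real (s i j) * cB C j))"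
    by (intro sum.cong refl) (simp add: sum_distrib_right[symmetric] sum_ind)
  also have "\<dots> = (\<Sum>i<k. \<Sum>j<k. sqrt (real (s i j * s j i) / (real (card (P i)) * real (card (P j))))
                 * real (card (B \<inter> P i)) * real (card (C \<inter> P j)))"
    unfolding sum_distrib_left
  proof (intro sum.cong refl)
    fix i j assume "i \<in> {..<k}" "j \<in> {..<k}"
    then have i: "i < k" and j: "j < k" by auto
    show "real (card (B \<inter> P i)) * (real (s i j) * cB C j) =
          sqrt (real (s i j * s j i) / (real (card (P i)) * real (card (P j)))) * real (card (B \<inter> P i)) * real (card (C \<inter> P j))"
      unfolding sqrt_coef[OF i j] cB_def by simp
  qed
  finally show ?thesis .
qed

end


theorem mainTheorem10:
  fixes V :: "'a set" and E :: "'a \<Rightarrow> 'a \<Rightarrow> bool" and k :: nat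
    and P :: "nat \<Rightarrow> 'a set" and s :: "nat \<Rightarrow> nat \<Rightarrow> nat" and B C :: "'a set"
  assumes "simple_graph V E" and "connected_graph V E"
    and "S_regular V E k P s"
    and "card V > k"
    and "B \<subseteq> V" and "C \<subseteq> V"
  shows "\<bar>real (edges_between E B C)
           - (\<Sum>i<k. \<Sum>j<k. sqrt (real (s i j * s j i) / (real (card (P i)) * real (card (P j))))
                 * real (card (B \<inter> P i)) * real (card (C \<inter> P j)))\<bar>
         \<le> lambda_B V E k P * sqrt (real (card B) * real (card C))"
proof -
  interpret sreg V E k P s using assms(1,3) by unfold_locales
  have kV: "card V > k" and B: "B \<subseteq> V" and C: "C \<subseteq> V" using assms by auto
  let ?D = "\<Sum>i<k. \<Sum>j<k. sqrt (real (s i j * s j i) / (real (card (P i)) * real (card (P j))))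
                 * real (card (B \<inter> P i)) * real (card (C \<inter> P j))"
  have iC: "ind C = (\<lambda>v. bw C v + bu C v)" by (auto simp: bu_def)
  have iB: "ind B = (\<lambda>v. bw B v + bu B v)" by (auto simp: bu_def)
  have AiC: "A (ind C) = (\<lambda>v. A (bw C) v + A (bu C) v)"
    by (subst iC) (rule ext, rule A_add)
  have uC: "inU (bu C)" by (rule bu_U[OF C])
  have uB: "inU (bu B)" by (rule bu_U[OF B])
  have "real (edges_between E B C) = ip V (ind B) (A (ind C))" by (rule edges_ip[OF B C])
  also have "\<dots> = ip V (ind B) (A (bw C)) + ip V (ind B) (A (bu C))"
    unfolding AiC by (rule ip_add_r)
  also have "ip V (ind B) (A (bu C)) = ip V (bw B) (A (bu C)) + ip V (bu B) (A (bu C))"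
    by (subst iB) (rule ip_add_l)
  also have "ip V (bw B) (A (bu C)) = 0" by (rule ip_bw_U[OF A_inU[OF uC]])
  finally have eq: "real (edges_between E B C) - ?D = ip V (bu B) (A (bu C))"
    using main_term[OF B, of C] by simp
  have "\<bar>ip V (bu B) (A (bu C))\<bar> \<le> lambda_B V E k P * (sqrt (ip V (bu B) (bu B)) * sqrt (ip V (bu C) (bu C)))"
    by (rule op_bound(1)[OF kV uB uC])
  also have "\<dots> \<le> lambda_B V E k P * (sqrt (real (card B)) * sqrt (real (card C)))"
    using op_bound(2)[OF kV uB uC] bu_norm[OF B] bu_norm[OF C]
    by (intro mult_left_mono mult_mono) (auto simp: ip_self_nonneg)
  also have "\<dots> = lambda_B V E k P * sqrt (real (card B) * real (card C))"
    by (simp add: real_sqrt_mult)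
  finally show ?thesis unfolding eq .
qed


end
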